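(* Let $\widehat\delta$ be the nearest representable approximation of the minimum increment angle in the positional encoding, let $C_1,C_2$ be column indices of source positional embeddings and $D_1,D_2$ column indices of target positional embeddings in $X\in\mathbb{R}^{K\times d}$. Then there exists a single transformer layer that simulates the increment operation $X[1,D_1]\leftarrow\sin(\arcsin(X[1,C_1])+\widehat\delta)$, $X[1,D_2]\leftarrow\cos(\arccos(X[1,C_2])+\widehat\delta)$.
   Context: Conventions: rows/columns indexed from $1$; $X[i,j]$ is the $(i,j)$ entry. $\phi(x)=\max\{x,0\}$ entrywise. Hardmax $\sigma$: row $i$ of $\sigma(\Phi)$ is $\frac{1}{|S_i|}\sum_{k\in S_i}e_k$, $S_i=\{k:\Phi_{ik}=\max_j\Phi_{ij}\}$. Positional encoding: $R_{\widehat\delta}=\begin{bmatrix}\cos\widehat\delta&-\sin\widehat\delta\\ \sin\widehat\delta&\cos\widehat\delta\end{bmatrix}$, $p_0=(0,1)^\top$, $p_i=R_{\widehat\delta}^\top p_{i-1}$, position $i$ encoded by $(p_i^{(1)},p_i^{(2)})$. For a weighted hypergraph with incident matrix $A\in\mathbb{R}^{n_v\times n_e}$ ($A_{ij}=w(e_j)$ if vertex $v_i\in e_j$, else $0$) and $K\ge\max\{n_v,n_e\}+1$, the padded incident matrix $\widetilde A\in\mathbb{R}^{K\times K}$ has $\widetilde A_{i+1,j+1}=A_{ij}$, zeros elsewhere. A transformer layer on $X\in\mathbb{R}^{K\times d}$ is $f(X,\widetilde A)=f_{\mathrm{mlp}}(f_{\mathrm{attn}}(X,\widetilde A))$, $f_{\mathrm{attn}}(X,\widetilde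 A)=\sum_{i\in M_A}\psi^{(i)}(X,\widetilde A)+\sum_{i\in M_{A^\top}}\psi^{(i)}(X,\widetilde A^\top)+\sum_{i\in M}\psi^{(i)}(X,I_K)+X$, $\psi(X,B)=B\,\sigma(XW_QW_K^\top X^\top)XW_V$ ($W_Q,W_K\in\mathbb{R}^{d\times2}$, $W_V\in\mathbb{R}^{d\times d}$), $f_{\mathrm{mlp}}(X)=Z^{(4)}W^{(4)}+X$, $Z^{(1)}=X$, $Z^{(j+1)}=\phi(Z^{(j)}W^{(j)})$ ($j=1,2,3$). Storage convention: scalars in the top row of a column (rest $0$), arrays of length $K-1$ in rows $2,\dots,K$; designated columns $B_{\mathrm{global}}$ (top $1$, rest $0$), $B_{\mathrm{local}}$ (top $0$, rest $1$), and scratchpad columns. "Simulating an operation" means the layer's weights can be chosen so that applying it to $X$ performs the stated update. *)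

theory Defs
  imports Complex_Main
begin

text \<open>Matrices are functions nat => nat => real, indexed from 1, with explicit
  dimensions; only entries in the stated index ranges matter.\<close>

type_synonym rmat = "nat \<Rightarrow> nat \<Rightarrow> real"

definition mmul :: "nat \<Rightarrow> rmat \<Rightarrow> rmat \<Rightarrow> rmat" where
  "mmul n A B = (\<lambda>i j. \<Sum>k=1..n. A i k * B k j)"

definition mtrans :: "rmat \<Rightarrow> rmat" where
  "mtrans A = (\<lambda>i j. A j i)"

definition idm :: "rmat" where
  "idm = (\<lambda>i j. if i = j then 1 else 0)"

definition relu_mat :: "rmat \<Rightarrow> rmat" where
  "relu_mat A = (\<lambda>i j. max (A i j) 0)"

definition hardmax :: "nat \<Rightarrow> rmat \<Rightarrow> rmat" where
  "hardmax K Phi = (\<lambda>i k.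
     let S = {k' \<in> {1..K}. Phi i k' = Max ((\<lambda>j. Phi i j) ` {1..K})}
     in if k \<in> S then 1 / real (card S) else 0)"

definition attn_head :: "nat \<Rightarrow> nat \<Rightarrow> rmat \<times> rmat \<times> rmat \<Rightarrow> rmat \<Rightarrow> rmat \<Rightarrow> rmat" where
  "attn_head K d W X B = (case W of (WQ, WK, WV) \<Rightarrow>
     mmul K B (mmul K (hardmax K (mmul d (mmul 2 (mmul d X WQ) (mtrans WK)) (mtrans X)))
                      (mmul d X WV)))"

definition f_attn :: "nat \<Rightarrow> nat \<Rightarrow> (rmat \<times> rmat \<times> rmat) list \<Rightarrow> (rmat \<times> rmat \<times> rmat) list
    \<Rightarrow> (rmat \<times> rmat \<times> rmat) list \<Rightarrow> rmat \<Rightarrow> rmat \<Rightarrow> rmat" where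
  "f_attn K d HA HAT HI X At = (\<lambda>i j.
      (\<Sum>h\<leftarrow>HA. attn_head K d h X At i j)
    + (\<Sum>h\<leftarrow>HAT. attn_head K d h X (mtrans At) i j)
    + (\<Sum>h\<leftarrow>HI. attn_head K d h X idm i j)
    + X i j)"

definition f_mlp :: "nat \<Rightarrow> nat \<Rightarrow> nat \<Rightarrow> nat \<Rightarrow> rmat \<Rightarrow> rmat \<Rightarrow> rmat \<Rightarrow> rmat \<Rightarrow> rmat \<Rightarrow> rmat" where
  "f_mlp d h1 h2 h3 W1 W2 W3 W4 X =
     (let Z2 = relu_mat (mmul d X W1);
          Z3 = relu_mat (mmul h1 Z2 W2);
          Z4 = relu_mat (mmul h2 Z3 W3)
      in (\<lambda>i j. mmul h3 Z4 W4 i j + X i j))"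

definition tf_layer :: "nat \<Rightarrow> nat \<Rightarrow> (rmat \<times> rmat \<times> rmat) list \<Rightarrow> (rmat \<times> rmat \<times> rmat) list
    \<Rightarrow> (rmat \<times> rmat \<times> rmat) list \<Rightarrow> nat \<Rightarrow> nat \<Rightarrow> nat \<Rightarrow> rmat \<Rightarrow> rmat \<Rightarrow> rmat \<Rightarrow> rmat
    \<Rightarrow> rmat \<Rightarrow> rmat \<Rightarrow> rmat" where
  "tf_layer K d HA HAT HI h1 h2 h3 W1 W2 W3 W4 X At =
     f_mlp d h1 h2 h3 W1 W2 W3 W4 (f_attn K d HA HAT HI X At)"

definition is_incident_matrix :: "nat \<Rightarrow> nat \<Rightarrow> rmat \<Rightarrow> bool" where
  "is_incident_matrix nv ne A \<longleftrightarrow>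
     (\<exists>(w :: nat \<Rightarrow> real) (mem :: nat \<Rightarrow> nat \<Rightarrow> bool).
        \<forall>i\<in>{1..nv}. \<forall>j\<in>{1..ne}. A i j = (if mem i j then w j else 0))"

definition padded :: "nat \<Rightarrow> nat \<Rightarrow> rmat \<Rightarrow> rmat" where
  "padded nv ne A = (\<lambda>i j. if 2 \<le> i \<and> i \<le> nv + 1 \<and> 2 \<le> j \<and> j \<le> ne + 1
                           then A (i - 1) (j - 1) else 0)"

fun pos_enc :: "real \<Rightarrow> nat \<Rightarrow> real \<times> real" where
  "pos_enc \<delta> 0 = (0, 1)"
| "pos_enc \<delta> (Suc i) = (let (a, b) = pos_enc \<delta> i in
      (cos \<delta> * a + sin \<delta> * b, - sin \<delta> * a + cos \<delta> * b))"

end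

theory Submission
  imports Defs
begin

lemma pos_enc_norm: "(fst (pos_enc \<delta> i))\<^sup>2 + (snd (pos_enc \<delta> i))\<^sup>2 = 1"
proof (induction i)
  case 0 then show ?case by simp
next
  case (Suc i)
  obtain a b where ab: "pos_enc \<delta> i = (a, b)" by (cases "pos_enc \<delta> i")
  have "a\<^sup>2 + b\<^sup>2 = 1" using Suc ab by simp
  moreover have "(cos \<delta> * a + sin \<delta> * b)\<^sup>2 + (- sin \<delta> * a + cos \<delta> * b)\<^sup>2
      = ((sin \<delta>)\<^sup>2 + (cos \<delta>)\<^sup>2) * (a\<^sup>2 + b\<^sup>2)"
    by algebra
  ultimately show ?case using ab by simp
qed

definition v1 :: "nat \<Rightarrow> real" where "v1 j = (if j = 1 then 1 else if j = 2 then -1 else 0)"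
definition v2 :: "nat \<Rightarrow> real" where "v2 j = (if j = 3 then 1 else if j = 4 then -1 else 0)"
definition v3 :: "nat \<Rightarrow> real" where "v3 j = (if j = 5 then 1 else if j = 6 then -1 else 0)"
definition v4 :: "nat \<Rightarrow> real" where "v4 j = (if j = 7 then 1 else if j = 8 then -1 else 0)"

definition W1m :: "nat \<Rightarrow> nat \<Rightarrow> nat \<Rightarrow> nat \<Rightarrow> rmat" where
  "W1m C1 C2 D1 D2 = (\<lambda>k j. (if k = C1 then v1 j else 0) + (if k = C2 then v2 j else 0)
      + (if k = D1 then v3 j else 0) + (if k = D2 then v4 j else 0))"

definition w1 :: "real \<Rightarrow> nat \<Rightarrow> real" where
  "w1 \<delta> j = [cos \<delta>, - cos \<delta>, sin \<delta>, sin \<delta>, -1, 1, 0, 0] ! (j - 1)"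
definition w2 :: "real \<Rightarrow> nat \<Rightarrow> real" where
  "w2 \<delta> j = [- sin \<delta>, - sin \<delta>, cos \<delta>, - cos \<delta>, 0, 0, -1, 1] ! (j - 1)"

definition W4m :: "real \<Rightarrow> nat \<Rightarrow> nat \<Rightarrow> rmat" where
  "W4m \<delta> D1 D2 = (\<lambda>j c. (if c = D1 then w1 \<delta> j else 0) + (if c = D2 then w2 \<delta> j else 0))"

lemma sum_pick: "finite S \<Longrightarrow> C \<in> S \<Longrightarrow> (\<Sum>k\<in>S. (X k :: real) * (if k = C then v else 0)) = X C * v"
proof -
  assume C: "C \<in> S" and f: "finite S"
  have "(\<Sum>k\<in>S. X k * (if k = C then v else 0)) = (\<Sum>k\<in>S. (if k = C then X k * v else 0))"
    by (rule sum.cong) auto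
  also have "\<dots> = X C * v" using C f by (simp add: sum.delta sum.delta')
  finally show ?thesis .
qed

lemma mmul_W1:
  assumes "C1 \<in> {1..d}" "C2 \<in> {1..d}" "D1 \<in> {1..d}" "D2 \<in> {1..d}"
  shows "mmul d X (W1m C1 C2 D1 D2) r j =
    X r C1 * v1 j + X r C2 * v2 j + X r D1 * v3 j + X r D2 * v4 j"
  unfolding mmul_def W1m_def
  by (simp add: distrib_left sum.distrib sum_pick[OF _ assms(1)] sum_pick[OF _ assms(2)]
      sum_pick[OF _ assms(3)] sum_pick[OF _ assms(4)] del: One_nat_def)

lemma sum8: "(\<Sum>k=(1::nat)..8. (f k :: real)) = f 1 + f 2 + f 3 + f 4 + f 5 + f 6 + f 7 + f 8"
proof -
  have "{1..8::nat} = {1,2,3,4,5,6,7,8}" by auto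
  then show ?thesis by simp
qed

lemma mmul_idm: "j \<in> {1..8} \<Longrightarrow> mmul 8 M idm r j = M r j"
proof -
  assume j: "j \<in> {1..8}"
  have "mmul 8 M idm r j = (\<Sum>k=1..8. if k = j then M r k else 0)"
    unfolding mmul_def idm_def by (rule sum.cong) auto
  also have "\<dots> = M r j" using j by (simp add: sum.delta')
  finally show ?thesis .
qed

lemma relu_at: "relu_mat M r j = max (M r j) 0" by (simp add: relu_mat_def)

theorem lemmaC2:
  fixes \<delta> :: real and K d C1 C2 D1 D2 :: nat
  assumes "C1 \<in> {1..d}" and "C2 \<in> {1..d}" and "D1 \<in> {1..d}" and "D2 \<in> {1..d}"
    and "D1 \<noteq> D2"
  shows "\<exists>HA HAT HI h1 h2 h3 W1 W2 W3 W4.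
     \<forall>(X :: rmat) nv ne (A :: rmat).
       K \<ge> max nv ne + 1 \<longrightarrow> is_incident_matrix nv ne A \<longrightarrow>
       (\<forall>c\<in>{C1, C2, D1, D2}. \<forall>r\<in>{2..K}. X r c = 0) \<longrightarrow>
       (\<exists>i\<le>K. X 1 C1 = fst (pos_enc \<delta> i) \<and> X 1 C2 = snd (pos_enc \<delta> i)) \<longrightarrow>
       (\<forall>r\<in>{1..K}. \<forall>c\<in>{1..d}.
          tf_layer K d HA HAT HI h1 h2 h3 W1 W2 W3 W4 X (padded nv ne A) r c =
            (if r = 1 \<and> c = D1 then sin (arcsin (X 1 C1) + \<delta>)
             else if r = 1 \<and> c = D2 then cos (arccos (X 1 C2) + \<delta>)
             else X r c))"
proof (intro exI allI impI ballI)
  fix X :: rmat and nv ne :: nat and A :: rmat and r c :: nat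
  assume zero: "\<forall>c\<in>{C1, C2, D1, D2}. \<forall>r\<in>{2..K}. X r c = 0"
    and pe: "\<exists>i\<le>K. X 1 C1 = fst (pos_enc \<delta> i) \<and> X 1 C2 = snd (pos_enc \<delta> i)"
    and r: "r \<in> {1..K}" and c: "c \<in> {1..d}"
  define a where "a = X r C1"
  define b where "b = X r C2"
  define p where "p = X r D1"
  define q where "q = X r D2"
  define u where "u = (\<lambda>j. max (a * v1 j + b * v2 j + p * v3 j + q * v4 j) 0)"
  have Z2: "relu_mat (mmul d X (W1m C1 C2 D1 D2)) r j = u j" for j
    unfolding relu_mat_def u_def a_def b_def p_def q_def
    by (simp add: mmul_W1[OF assms(1-4)])
  have Z3: "relu_mat (mmul 8 (relu_mat (mmul d X (W1m C1 C2 D1 D2))) idm) r j = u j"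
    if "j \<in> {1..8}" for j
    using that unfolding relu_mat_def[of "mmul 8 _ idm"] by (simp add: mmul_idm Z2 u_def)
  have Z4: "relu_mat (mmul 8 (relu_mat (mmul 8 (relu_mat (mmul d X (W1m C1 C2 D1 D2))) idm)) idm) r j = u j"
    if "j \<in> {1..8}" for j
    using that by (subst relu_at, subst mmul_idm) (simp_all add: Z3 u_def)
  have out: "mmul 8 (relu_mat (mmul 8 (relu_mat (mmul 8 (relu_mat (mmul d X (W1m C1 C2 D1 D2))) idm)) idm))
       (W4m \<delta> D1 D2) r c = (\<Sum>j=1..8. u j * W4m \<delta> D1 D2 j c)"
    unfolding mmul_def[of 8 _ "W4m \<delta> D1 D2"] by (rule sum.cong) (auto simp: Z4)
  have fa: "f_attn K d [] [] [] X (padded nv ne A) = X"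
    unfolding f_attn_def by simp
  have res: "tf_layer K d [] [] [] 8 8 8 (W1m C1 C2 D1 D2) idm idm (W4m \<delta> D1 D2) X (padded nv ne A) r c
      = (\<Sum>j=1..8. u j * W4m \<delta> D1 D2 j c) + X r c"
    unfolding tf_layer_def fa f_mlp_def Let_def using out by simp
  have absb: "max b 0 + max (- b) 0 = \<bar>b\<bar>" by (simp add: max_def)
  have absa: "max a 0 + max (- a) 0 = \<bar>a\<bar>" by (simp add: max_def)
  have ida: "max a 0 - max (- a) 0 = a" by (simp add: max_def)
  have idb: "max b 0 - max (- b) 0 = b" by (simp add: max_def)
  have idp: "max p 0 - max (- p) 0 = p" by (simp add: max_def)
  have idq: "max q 0 - max (- q) 0 = q" by (simp add: max_def)
  have sD1: "(\<Sum>j=1..8. u j * W4m \<delta> D1 D2 j D1) = cos \<delta> * a + sin \<delta> * \<bar>b\<bar> - p"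
  proof -
    have "(\<Sum>j=1..8. u j * W4m \<delta> D1 D2 j D1) =
      cos \<delta> * (max a 0 - max (- a) 0) + sin \<delta> * (max b 0 + max (- b) 0) - (max p 0 - max (- p) 0)"
      unfolding sum8 W4m_def using assms(5)
      by (simp add: u_def v1_def v2_def v3_def v4_def w1_def algebra_simps)
    then show ?thesis using absb ida idp by simp
  qed
  have sD2: "(\<Sum>j=1..8. u j * W4m \<delta> D1 D2 j D2) = cos \<delta> * b - sin \<delta> * \<bar>a\<bar> - q"
  proof -
    have "(\<Sum>j=1..8. u j * W4m \<delta> D1 D2 j D2) =
      cos \<delta> * (max b 0 - max (- b) 0) - sin \<delta> * (max a 0 + max (- a) 0) - (max q 0 - max (- q) 0)"
      unfolding sum8 W4m_def using assms(5)
      by (simp add: u_def v1_def v2_def v3_def v4_def w2_def algebra_simps)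
    then show ?thesis using absa idb idq by simp
  qed
  have sO: "c \<noteq> D1 \<Longrightarrow> c \<noteq> D2 \<Longrightarrow> (\<Sum>j=1..8. u j * W4m \<delta> D1 D2 j c) = 0"
    unfolding W4m_def by simp
  show "tf_layer K d [] [] [] 8 8 8 (W1m C1 C2 D1 D2) idm idm (W4m \<delta> D1 D2) X (padded nv ne A) r c =
       (if r = 1 \<and> c = D1 then sin (arcsin (X 1 C1) + \<delta>)
        else if r = 1 \<and> c = D2 then cos (arccos (X 1 C2) + \<delta>) else X r c)"
  proof (cases "r = 1")
    case True
    obtain i where "X 1 C1 = fst (pos_enc \<delta> i)" "X 1 C2 = snd (pos_enc \<delta> i)" using pe by blast
    then have n: "a\<^sup>2 + b\<^sup>2 = 1" using pos_enc_norm[of \<delta> i] True a_def b_def by simp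
    have "a\<^sup>2 \<le> 1" "b\<^sup>2 \<le> 1" using n zero_le_power2[of a] zero_le_power2[of b] by linarith+
    then have "\<bar>a\<bar> \<le> 1" "\<bar>b\<bar> \<le> 1" by (simp_all add: abs_square_le_1)
    then have a1: "-1 \<le> a \<and> a \<le> 1" and b1: "-1 \<le> b \<and> b \<le> 1" by auto
    have "1 - a\<^sup>2 = b\<^sup>2" using n by linarith
    then have sa: "sqrt (1 - a\<^sup>2) = \<bar>b\<bar>" by simp
    have "1 - b\<^sup>2 = a\<^sup>2" using n by linarith
    then have sb: "sqrt (1 - b\<^sup>2) = \<bar>a\<bar>" by simp
    have t1: "sin (arcsin a + \<delta>) = cos \<delta> * a + sin \<delta> * \<bar>b\<bar>"
      using a1 by (simp only: sin_add cos_arcsin sa sin_arcsin) (simp add: algebra_simps)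
    have t2: "cos (arccos b + \<delta>) = cos \<delta> * b - sin \<delta> * \<bar>a\<bar>"
      using b1 by (simp only: cos_add sin_arccos sb cos_arccos) (simp add: algebra_simps)
    have X1: "X 1 C1 = a" "X 1 C2 = b" using True a_def b_def by auto
    show ?thesis
    proof (cases "c = D1")
      case True
      then show ?thesis using \<open>r = 1\<close> res sD1 t1 X1 p_def by simp
    next
      case F1: False
      show ?thesis
      proof (cases "c = D2")
        case True
        then show ?thesis using \<open>r = 1\<close> F1 res sD2 t2 X1 q_def by simp
      next
        case False
        then show ?thesis using F1 res sO by simp
      qed
    qed
  next
    case False
    then have r2: "r \<in> {2..K}" using r by auto
    then have "a = 0" "b = 0" "p = 0" "q = 0" using zero a_def b_def p_def q_def by auto
    then show ?thesis using False res sD1 sD2 sO by (cases "c = D1"; cases "c = D2") auto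
  qed
qed

end
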